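(* Let $X$ be a compact, Hausdorff, second-countable topological space, and let $\mathcal{Y}$ be a non-empty weak-$*$ compact subset of $\mathcal{M}(X)$. For a measure $\mu_0\in\mathcal{M}(X)$ the following are equivalent: (i) for every $f\in C^0(X)$ with $\int_X f\,d\mu_0<0$ there exists $\mu\in\mathcal{Y}$ with $\int_X f\,d\mu\le 0$; (ii) for every $f\in C^0(X)$ with $\int_X f\,d\mu_0=0$ there exists $\mu\in\mathcal{Y}$ with $\int_X f\,d\mu\le0$; (iii) $\mu_0$ belongs to the weak-$*$ closure of the convex hull of the positive cone over $\mathcal{Y}$; (iv) there exists a sequence $\{\mu_k\}$ in $\mathcal{Y}$ such that \[ \lim_{k\to\infty}\frac1k\sum_{i=1}^k\frac{1}{\mu_i(X)}\int_X f\,d\mu_i=\frac{1}{\mu_0(X)}\int_X f\,d\mu_0\quad\text{for all } f\in C^0(X). \]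
   Context: $C^0(X)$ is the space of continuous real functions on $X$ with the sup norm. $\mathcal{M}(X)$ is the set of (positive) Radon measures on $X$, identified via the Riesz representation theorem with positive bounded linear functionals on $C^0(X)$; the weak-$*$ topology on $\mathcal{M}(X)$ is the coarsest topology making $\mu\mapsto\int_X f\,d\mu$ continuous for every $f\in C^0(X)$. The positive cone over $\mathcal{Y}$ is $\{\lambda\mu:\lambda>0,\mu\in\mathcal{Y}\}$, and its convex hull is the set of finite convex combinations of its elements. *)

theory Defs
  imports "HOL-Analysis.Analysis"
begin

definition C0 :: "('a::topological_space \<Rightarrow> real) set" where
  "C0 = {f. continuous_on UNIV f}"

text \<open>M(X): nonzero positive finite Borel measures on X. On a compact metrizable
  (compact Hausdorff second-countable) space these are exactly the nonzero Radon measures.\<close>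
definition radon_measures :: "'a::topological_space measure set" where
  "radon_measures = {M. sets M = sets borel \<and> finite_measure M \<and> emeasure M UNIV \<noteq> 0}"

definition weak_star_topology :: "'a::topological_space measure topology" where
  "weak_star_topology = topology_generated_by
     {{\<mu> \<in> radon_measures. (\<integral>x. f x \<partial>\<mu>) \<in> U} | f U. f \<in> C0 \<and> open U}"

definition pos_cone :: "'a::topological_space measure set \<Rightarrow> 'a measure set" where
  "pos_cone Y = {scale_measure (ennreal l) \<mu> | l \<mu>. l > 0 \<and> \<mu> \<in> Y}"

definition meas_convex_hull :: "'a::topological_space measure set \<Rightarrow> 'a measure set" where
  "meas_convex_hull S = {\<nu>. \<exists>(I::nat set) c m. finite I \<and> I \<noteq> {} \<and>
      (\<forall>i\<in>I. c i \<ge> (0::real) \<and> m i \<in> S) \<and> (\<Sum>i\<in>I. c i) = 1 \<and>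
      sets \<nu> = sets borel \<and>
      (\<forall>A\<in>sets borel. emeasure \<nu> A = (\<Sum>i\<in>I. ennreal (c i) * emeasure (m i) A))}"

end

theory Submission
  imports Defs
begin



lemma C0_bound:
  assumes "compact (UNIV::'a::topological_space set)" "f \<in> C0"
  shows "\<exists>B\<ge>0. \<forall>x::'a. \<bar>f x\<bar> \<le> B"
proof -
  have "compact (f ` UNIV)" using assms compact_continuous_image by (auto simp: C0_def)
  then obtain B where "\<forall>y\<in>f ` UNIV. norm y \<le> B" using compact_imp_bounded bounded_iff by metis
  then show ?thesis by (metis abs_ge_zero order_trans real_norm_def rangeI)
qed

lemma C0_borel: "f \<in> C0 \<Longrightarrow> f \<in> borel_measurable borel"
  by (simp add: C0_def borel_measurable_continuous_onI)

lemma fin_integrable: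
  assumes "compact (UNIV::'a::topological_space set)" "f \<in> C0" "sets N = sets borel" "finite_measure N"
  shows "integrable N (f::'a \<Rightarrow> real)"
proof -
  obtain B where B: "\<forall>x. \<bar>f x\<bar> \<le> B" using C0_bound assms by blast
  have m: "f \<in> borel_measurable N" using C0_borel[OF assms(2)] assms(3) measurable_cong_sets by blast
  show ?thesis
    by (rule finite_measure.integrable_const_bound[OF assms(4), where B=B])
       (use B m in auto)
qed

lemma meas_conv: "sets N = sets borel \<Longrightarrow> f \<in> borel_measurable borel \<Longrightarrow> f \<in> borel_measurable N"
  using measurable_cong_sets by blast

lemma mix_nn:
  fixes I :: "'i set" and M :: "'i \<Rightarrow> 'a::topological_space measure"
  assumes I: "finite I" and sn: "sets \<nu> = sets borel" and sM: "\<And>i. i \<in> I \<Longrightarrow> sets (M i) = sets borel"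
    and em: "\<And>A. A \<in> sets borel \<Longrightarrow> emeasure \<nu> A = (\<Sum>i\<in>I. c i * emeasure (M i) A)"
    and u: "u \<in> borel_measurable borel"
  shows "(\<integral>\<^sup>+x. u x \<partial>\<nu>) = (\<Sum>i\<in>I. c i * (\<integral>\<^sup>+x. u x \<partial>M i))"
  using u
proof (induction rule: borel_measurable_induct)
  case (cong f g)
  then have "f = g" by auto
  then show ?case using cong by simp
next
  case (set A)
  then show ?case using sn sM em by simp
next
  case (mult u c')
  have mn: "u \<in> borel_measurable \<nu>" using meas_conv[OF sn mult(2)] .
  have mi: "\<And>i. i \<in> I \<Longrightarrow> u \<in> borel_measurable (M i)" using meas_conv[OF sM mult(2)] .
  have "(\<integral>\<^sup>+x. c' * u x \<partial>\<nu>) = c' * (\<Sum>i\<in>I. c i * (\<integral>\<^sup>+x. u x \<partial>M i))"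
    using nn_integral_cmult[OF mn] mult by simp
  also have "\<dots> = (\<Sum>i\<in>I. c i * (\<integral>\<^sup>+x. c' * u x \<partial>M i))"
    by (simp add: sum_distrib_left nn_integral_cmult[OF mi] mult.left_commute)
  finally show ?case .
next
  case (add u v)
  have ub: "u \<in> borel_measurable borel" "v \<in> borel_measurable borel" using add by blast+
  have mn: "u \<in> borel_measurable \<nu>" "v \<in> borel_measurable \<nu>" using meas_conv[OF sn ub(1)] meas_conv[OF sn ub(2)] .
  have mi: "\<And>i. i \<in> I \<Longrightarrow> u \<in> borel_measurable (M i)" "\<And>i. i \<in> I \<Longrightarrow> v \<in> borel_measurable (M i)"
    using meas_conv[OF sM ub(1)] meas_conv[OF sM ub(2)] by auto
  show ?case
    using add mn mi by (simp add: nn_integral_add sum.distrib distrib_left)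
next
  case (seq U)
  have mn: "\<And>i. U i \<in> borel_measurable \<nu>" using meas_conv[OF sn seq(1)] .
  have mi: "\<And>i j. j \<in> I \<Longrightarrow> U i \<in> borel_measurable (M j)" using meas_conv[OF sM seq(1)] .
  have inc: "incseq U" by fact
  have IH: "\<And>n. (\<integral>\<^sup>+x. U n x \<partial>\<nu>) = (\<Sum>j\<in>I. c j * (\<integral>\<^sup>+x. U n x \<partial>M j))" by fact
  have SA: "\<And>x. (SUP i. U i) x = (SUP i. U i x)" by (metis SUP_apply)
  have "(\<integral>\<^sup>+x. (SUP i. U i) x \<partial>\<nu>) = (\<integral>\<^sup>+x. (SUP i. U i x) \<partial>\<nu>)" by (simp only: SA)
  also have "\<dots> = (SUP i. (\<integral>\<^sup>+x. U i x \<partial>\<nu>))"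
    by (rule nn_integral_monotone_convergence_SUP[OF inc mn])
  also have "\<dots> = (SUP n. \<Sum>j\<in>I. c j * (\<integral>\<^sup>+x. U n x \<partial>M j))" using IH by simp
  also have "\<dots> = (\<Sum>j\<in>I. SUP n. c j * (\<integral>\<^sup>+x. U n x \<partial>M j))"
  proof (rule ennreal_SUP_sum)
    fix j assume "j \<in> I"
    show "incseq (\<lambda>n. c j * (\<integral>\<^sup>+x. U n x \<partial>M j))"
      using inc unfolding incseq_def le_fun_def
      by (auto intro!: mult_left_mono nn_integral_mono)
  qed
  also have "\<dots> = (\<Sum>j\<in>I. c j * (SUP n. (\<integral>\<^sup>+x. U n x \<partial>M j)))"
    by (simp add: SUP_mult_left_ennreal)
  also have "\<dots> = (\<Sum>j\<in>I. c j * (\<integral>\<^sup>+x. (SUP i. U i) x \<partial>M j))"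
    by (intro sum.cong refl arg_cong2[where f="(*)"])
       (simp only: SA nn_integral_monotone_convergence_SUP[OF inc mi])
  finally show ?case .
qed



lemma mix_int:
  fixes I :: "'i set" and M :: "'i \<Rightarrow> 'a::topological_space measure"
  assumes cpt: "compact (UNIV::'a set)" and f: "f \<in> C0"
    and I: "finite I" and sn: "sets \<nu> = sets borel"
    and sM: "\<And>i. i \<in> I \<Longrightarrow> sets (M i) = sets borel" and fM: "\<And>i. i \<in> I \<Longrightarrow> finite_measure (M i)"
    and c: "\<And>i. i \<in> I \<Longrightarrow> c i \<ge> 0"
    and em: "\<And>A. A \<in> sets borel \<Longrightarrow> emeasure \<nu> A = (\<Sum>i\<in>I. ennreal (c i) * emeasure (M i) A)"
  shows "finite_measure \<nu>" "(\<integral>x. f x \<partial>\<nu>) = (\<Sum>i\<in>I. c i * (\<integral>x. f x \<partial>M i))"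
proof -
  have spn: "space \<nu> = UNIV" using sets_eq_imp_space_eq[OF sn] by simp
  have spM: "\<And>i. i \<in> I \<Longrightarrow> space (M i) = UNIV" using sets_eq_imp_space_eq[OF sM] by simp
  have "emeasure \<nu> (space \<nu>) = (\<Sum>i\<in>I. ennreal (c i) * emeasure (M i) UNIV)" using em spn by simp
  also have "\<dots> < top"
  proof -
    have "\<forall>i\<in>I. emeasure (M i) UNIV < top"
      using fM finite_measure.emeasure_finite top.not_eq_extremum by blast
    then show ?thesis using I by (simp add: ennreal_mult_less_top)
  qed
  finally show fn: "finite_measure \<nu>" by (intro finite_measureI) simp
  obtain B where B: "B \<ge> 0" "\<forall>x. \<bar>f x\<bar> \<le> B" using C0_bound[OF cpt f] by blast
  define g where "g = (\<lambda>x. f x + B)"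
  have gC: "g \<in> C0" using f by (auto simp: g_def C0_def intro!: continuous_intros)
  have g0: "\<And>x. g x \<ge> 0" using B unfolding g_def by (smt (verit))
  have key: "\<And>N. sets N = sets borel \<Longrightarrow> finite_measure N \<Longrightarrow>
      (\<integral>x. f x \<partial>N) = (\<integral>x. g x \<partial>N) - B * measure N UNIV \<and> (\<integral>\<^sup>+x. ennreal (g x) \<partial>N) = ennreal (\<integral>x. g x \<partial>N)"
  proof -
    fix N :: "'a measure" assume N: "sets N = sets borel" "finite_measure N"
    have sp: "space N = UNIV" using sets_eq_imp_space_eq[OF N(1)] by simp
    have i1: "integrable N f" using fin_integrable[OF cpt f N] .
    have i2: "integrable N g" using fin_integrable[OF cpt gC N] .
    have "(\<integral>x. g x \<partial>N) = (\<integral>x. f x \<partial>N) + B * measure N UNIV"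
    proof -
      have "(\<integral>x. f x + B \<partial>N) = (\<integral>x. f x \<partial>N) + (\<integral>x. B \<partial>N)"
        by (rule Bochner_Integration.integral_add[OF i1 finite_measure.integrable_const[OF N(2)]])
      then show ?thesis unfolding g_def using sp by (simp add: mult.commute)
    qed
    moreover have "(\<integral>\<^sup>+x. ennreal (g x) \<partial>N) = ennreal (\<integral>x. g x \<partial>N)"
      by (rule nn_integral_eq_integral[OF i2]) (use g0 in auto)
    ultimately show "(\<integral>x. f x \<partial>N) = (\<integral>x. g x \<partial>N) - B * measure N UNIV \<and> (\<integral>\<^sup>+x. ennreal (g x) \<partial>N) = ennreal (\<integral>x. g x \<partial>N)"
      by simp
  qed
  have gb: "(\<lambda>x. ennreal (g x)) \<in> borel_measurable borel" using C0_borel[OF gC] by simp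
  have "ennreal (\<integral>x. g x \<partial>\<nu>) = (\<Sum>i\<in>I. ennreal (c i) * ennreal (\<integral>x. g x \<partial>M i))"
    using mix_nn[OF I sn sM em gb] key[OF sn fn] key[OF sM fM] by simp
  also have "\<dots> = ennreal (\<Sum>i\<in>I. c i * (\<integral>x. g x \<partial>M i))"
  proof -
    have gi: "\<And>i. (\<integral>x. g x \<partial>M i) \<ge> 0" using g0 by (simp add: integral_nonneg)
    have "(\<Sum>i\<in>I. ennreal (c i) * ennreal (\<integral>x. g x \<partial>M i)) = (\<Sum>i\<in>I. ennreal (c i * (\<integral>x. g x \<partial>M i)))"
      using c gi by (intro sum.cong refl) (simp add: ennreal_mult)
    also have "\<dots> = ennreal (\<Sum>i\<in>I. c i * (\<integral>x. g x \<partial>M i))"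
      using c gi by (intro sum_ennreal) simp
    finally show ?thesis .
  qed
  finally have G: "(\<integral>x. g x \<partial>\<nu>) = (\<Sum>i\<in>I. c i * (\<integral>x. g x \<partial>M i))"
    using c g0 by (subst (asm) ennreal_inj) (auto intro!: integral_nonneg sum_nonneg)
  have "ennreal (measure \<nu> UNIV) = (\<Sum>i\<in>I. ennreal (c i) * ennreal (measure (M i) UNIV))"
    using em[of UNIV] fn fM spn spM by (simp add: finite_measure.emeasure_eq_measure)
  also have "\<dots> = ennreal (\<Sum>i\<in>I. c i * measure (M i) UNIV)"
  proof -
    have "(\<Sum>i\<in>I. ennreal (c i) * ennreal (measure (M i) UNIV)) = (\<Sum>i\<in>I. ennreal (c i * measure (M i) UNIV))"
      using c by (intro sum.cong refl) (simp add: ennreal_mult)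
    also have "\<dots> = ennreal (\<Sum>i\<in>I. c i * measure (M i) UNIV)"
      using c by (intro sum_ennreal) simp
    finally show ?thesis .
  qed
  finally have Mm: "measure \<nu> UNIV = (\<Sum>i\<in>I. c i * measure (M i) UNIV)"
    using c by (subst (asm) ennreal_inj) (auto intro!: sum_nonneg)
  show "(\<integral>x. f x \<partial>\<nu>) = (\<Sum>i\<in>I. c i * (\<integral>x. f x \<partial>M i))"
    using key[OF sn fn] key[OF sM fM] G Mm
    by (simp add: sum_subtractf sum_distrib_left right_diff_distrib mult.left_commute)
qed



lemma mix_exists:
  fixes M :: "'i \<Rightarrow> 'a::topological_space measure" and c :: "'i \<Rightarrow> ennreal"
  assumes I: "finite I" and sM: "\<And>i. i \<in> I \<Longrightarrow> sets (M i) = sets borel"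
  shows "\<exists>\<nu>. sets \<nu> = sets borel \<and> (\<forall>A\<in>sets borel. emeasure \<nu> A = (\<Sum>i\<in>I. c i * emeasure (M i) A))"
proof -
  define \<mu>' where "\<mu>' = (\<lambda>A. \<Sum>i\<in>I. c i * emeasure (M i) A)"
  define \<nu> where "\<nu> = measure_of UNIV (sets borel) \<mu>'"
  have sa: "sigma_algebra UNIV (sets borel)" using sets.sigma_algebra_axioms[of borel] by simp
  have s: "sets \<nu> = sets borel"
    unfolding \<nu>_def using sets.space_closed[of borel] sets.sigma_sets_eq[of borel] by (simp add: sets_measure_of)
  have pos: "positive (sets borel) \<mu>'" by (simp add: positive_def \<mu>'_def)
  have ca: "countably_additive (sets borel) \<mu>'"
    unfolding countably_additive_def
  proof (intro allI impI)
    fix A :: "nat \<Rightarrow> 'a set" assume A: "range A \<subseteq> sets borel" "disjoint_family A"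
    have "(\<Sum>n. \<mu>' (A n)) = (\<Sum>i\<in>I. \<Sum>n. c i * emeasure (M i) (A n))"
      unfolding \<mu>'_def by (rule suminf_sum) simp
    also have "\<dots> = (\<Sum>i\<in>I. c i * emeasure (M i) (\<Union>n. A n))"
    proof (intro sum.cong refl)
      fix i assume "i \<in> I"
      then have "range A \<subseteq> sets (M i)" using A sM by simp
      then show "(\<Sum>n. c i * emeasure (M i) (A n)) = c i * emeasure (M i) (\<Union>n. A n)"
        using suminf_emeasure[of A "M i"] A by simp
    qed
    finally show "(\<Sum>n. \<mu>' (A n)) = \<mu>' (\<Union> (range A))" unfolding \<mu>'_def by simp
  qed
  have "\<forall>A\<in>sets borel. emeasure \<nu> A = \<mu>' A"
    unfolding \<nu>_def using emeasure_measure_of_sigma[OF sa pos ca] by blast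
  then show ?thesis using s unfolding \<mu>'_def by blast
qed



lemma sep_family:
  assumes cpt: "compact (UNIV::'a::{t2_space,second_countable_topology} set)"
  shows "\<exists>G. countable G \<and> G \<subseteq> C0 \<and> (\<forall>x y::'a. x \<noteq> y \<longrightarrow> (\<exists>g\<in>G. g x \<noteq> g y))"
proof -
  have cs: "compact_space (euclidean::'a topology)" by (simp add: compact_space_def cpt)
  have hs: "Hausdorff_space (euclidean::'a topology)"
    unfolding Hausdorff_space_def disjnt_def using hausdorff by auto
  have ns: "normal_space (euclidean::'a topology)"
    using compact_Hausdorff_or_regular_imp_normal_space cs hs by blast
  have ex: "\<exists>f. f \<in> C0 \<and> f x \<noteq> f y" if "x \<noteq> y" for x y :: 'a
  proof -
    have "closedin euclidean {x}" "closedin euclidean {y}" by (simp_all flip: closed_closedin)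
    moreover have "disjnt {x} {y}" using that by simp
    ultimately obtain f where "continuous_map euclidean euclideanreal f" "f ` {x} \<subseteq> {0}" "f ` {y} \<subseteq> {1}"
      using Urysohn_lemma_alt[OF ns, of "{x}" "{y}" 0 1] by blast
    then show ?thesis by (auto simp: C0_def)
  qed
  define sep where "sep = (\<lambda>(x::'a,y::'a). SOME f. f \<in> C0 \<and> f x \<noteq> f y)"
  have sepP: "sep (x,y) \<in> C0 \<and> sep (x,y) x \<noteq> sep (x,y) y" if "x \<noteq> y" for x y
    unfolding sep_def using someI_ex[OF ex[OF that]] by simp
  define Op where "Op = (\<lambda>q. {p::'a\<times>'a. sep q (fst p) \<noteq> sep q (snd p)})"
  define Q where "Q = {(x::'a,y). x \<noteq> y}"
  have opn: "open S" if S: "S \<in> Op ` Q" for S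
  proof -
    obtain q where q: "q \<in> Q" "S = Op q" using S by blast
    then have "continuous_on UNIV (sep q)" using sepP unfolding Q_def C0_def by auto
    then have "continuous_on UNIV (\<lambda>p::'a\<times>'a. sep q (fst p))" "continuous_on UNIV (\<lambda>p::'a\<times>'a. sep q (snd p))"
      by (auto intro!: continuous_on_compose2[of UNIV "sep q"] continuous_intros)
    then show ?thesis unfolding q Op_def by (rule open_Collect_neq)
  qed
  obtain F' where F': "F' \<subseteq> Op ` Q" "countable F'" "\<Union>F' = \<Union>(Op ` Q)"
    using Lindelof[of "Op ` Q"] opn by blast
  obtain Q' where Q': "countable Q'" "Q' \<subseteq> Q" "F' = Op ` Q'"
    using countable_subset_image[of F' Op Q] F' by blast
  show ?thesis
  proof (intro exI conjI allI impI)
    show "countable (sep ` Q')" using Q' by simp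
    show "sep ` Q' \<subseteq> C0" using Q' sepP unfolding Q_def by auto
    fix x y :: 'a assume xy: "x \<noteq> y"
    then have "(x,y) \<in> Op (x,y)" using sepP unfolding Op_def by simp
    then have "(x,y) \<in> \<Union>F'" using F'(3) xy unfolding Q_def by blast
    then obtain q where "q \<in> Q'" "(x,y) \<in> Op q" using Q'(3) by blast
    then show "\<exists>g\<in>sep ` Q'. g x \<noteq> g y" unfolding Op_def by auto
  qed
qed



primrec Aset :: "('a \<Rightarrow> real) set \<Rightarrow> nat \<Rightarrow> ('a \<Rightarrow> real) set" where
  "Aset G 0 = G \<union> range (\<lambda>q::rat. \<lambda>x. real_of_rat q)"
| "Aset G (Suc n) = Aset G n \<union> (\<lambda>(f,g). \<lambda>x. f x + g x) ` (Aset G n \<times> Aset G n)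
      \<union> (\<lambda>(f,g). \<lambda>x. f x * g x) ` (Aset G n \<times> Aset G n)"

lemma Aset_mono: "m \<le> n \<Longrightarrow> Aset G m \<subseteq> Aset G n"
  by (rule lift_Suc_mono_le[of "Aset G"]) auto

lemma Aset_countable: "countable G \<Longrightarrow> countable (Aset G n)"
  by (induction n) auto

lemma Aset_C0: "G \<subseteq> C0 \<Longrightarrow> Aset G n \<subseteq> C0"
  by (induction n) (auto simp: C0_def intro!: continuous_intros)

lemma Aset_add:
  assumes "f \<in> (\<Union>n. Aset G n)" "g \<in> (\<Union>n. Aset G n)"
  shows "(\<lambda>x. f x + g x) \<in> (\<Union>n. Aset G n)" "(\<lambda>x. f x * g x) \<in> (\<Union>n. Aset G n)"
proof -
  obtain m n where "f \<in> Aset G m" "g \<in> Aset G n" using assms by blast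
  then have "f \<in> Aset G (max m n)" "g \<in> Aset G (max m n)" using Aset_mono[of m "max m n" G] Aset_mono[of n "max m n" G] by auto
  then have "(\<lambda>x. f x + g x) \<in> Aset G (Suc (max m n))" "(\<lambda>x. f x * g x) \<in> Aset G (Suc (max m n))"
    by force+
  then show "(\<lambda>x. f x + g x) \<in> (\<Union>n. Aset G n)" "(\<lambda>x. f x * g x) \<in> (\<Union>n. Aset G n)" by blast+
qed



lemma half_tri1: "\<bar>a - b\<bar> < e/2 \<Longrightarrow> \<bar>c - d\<bar> < e/2 \<Longrightarrow> \<bar>(a + c) - (b + d)\<bar> < (e::real)" by arith

lemma half_tri2: "\<bar>a - b\<bar> < e/2 \<Longrightarrow> \<bar>b - d\<bar> < e/2 \<Longrightarrow> \<bar>a - d\<bar> < (e::real)" by arith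

lemma dense_family:
  assumes cpt: "compact (UNIV::'a::{t2_space,second_countable_topology} set)"
  shows "\<exists>D::nat \<Rightarrow> 'a \<Rightarrow> real. (\<forall>j. D j \<in> C0) \<and> (\<forall>f\<in>C0. \<forall>e>0. \<exists>j. \<forall>x. \<bar>f x - D j x\<bar> < e)"
proof -
  obtain G where G0: "countable G \<and> G \<subseteq> C0 \<and> (\<forall>x y::'a. x \<noteq> y \<longrightarrow> (\<exists>g\<in>G. g x \<noteq> g y))"
    using sep_family[OF cpt] by (rule exE)
  note G = conjunct1[OF G0] conjunct1[OF conjunct2[OF G0]] conjunct2[OF conjunct2[OF G0]]
  define DS where "DS = (\<Union>n. Aset G n)"
  have DSc: "countable DS" unfolding DS_def using Aset_countable[OF G(1)] by auto
  have DSC0: "DS \<subseteq> C0" unfolding DS_def using Aset_C0[OF G(2)] by auto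
  have DSadd: "\<And>f g. f \<in> DS \<Longrightarrow> g \<in> DS \<Longrightarrow> (\<lambda>x. f x + g x) \<in> DS"
    and DSmult: "\<And>f g. f \<in> DS \<Longrightarrow> g \<in> DS \<Longrightarrow> (\<lambda>x. f x * g x) \<in> DS"
    unfolding DS_def by (rule Aset_add(1), assumption+) (rule Aset_add(2), assumption+)
  have DSq: "(\<lambda>x. real_of_rat q) \<in> DS" for q unfolding DS_def by (rule UN_I[of 0]) auto
  have DSG: "G \<subseteq> DS" unfolding DS_def by (auto intro!: UN_I[of 0])
  define R where "R = {f::'a \<Rightarrow> real. continuous_on UNIV f \<and> (\<forall>e>0. \<exists>d\<in>DS. \<forall>x. \<bar>f x - d x\<bar> < e)}"
  have DSR: "DS \<subseteq> R"
  proof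
    fix d assume d: "d \<in> DS"
    then have "continuous_on UNIV d" using DSC0 by (auto simp: C0_def)
    moreover have "\<forall>e>0. \<exists>d'\<in>DS. \<forall>x. \<bar>d x - d' x\<bar> < e" using d by (intro allI impI bexI[of _ d]) auto
    ultimately show "d \<in> R" by (simp add: R_def)
  qed
  have Rap: "\<exists>d\<in>DS. \<forall>x. \<bar>f x - d x\<bar> < e" if "f \<in> R" "e > 0" for f e
  proof -
    have "\<forall>e>0. \<exists>d\<in>DS. \<forall>x. \<bar>f x - d x\<bar> < e" using that(1) by (simp add: R_def)
    then show ?thesis using that(2) by simp
  qed
  interpret function_ring_on R UNIV
  proof
    show "compact (UNIV::'a set)" by (fact cpt)
  next
    fix f assume "f \<in> R" then show "continuous_on UNIV f" by (simp add: R_def)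
  next
    fix f g assume f: "f \<in> R" and g: "g \<in> R"
    show "(\<lambda>x. f x + g x) \<in> R" unfolding R_def
    proof (intro CollectI conjI allI impI)
      show "continuous_on UNIV (\<lambda>x. f x + g x)" using f g by (auto simp: R_def intro!: continuous_intros)
      fix e :: real assume e: "e > 0"
      obtain d1 where d1: "d1 \<in> DS" "\<forall>x. \<bar>f x - d1 x\<bar> < e/2" using Rap[OF f, of "e/2"] e by auto
      obtain d2 where d2: "d2 \<in> DS" "\<forall>x. \<bar>g x - d2 x\<bar> < e/2" using Rap[OF g, of "e/2"] e by auto
      show "\<exists>d\<in>DS. \<forall>x. \<bar>f x + g x - d x\<bar> < e"
      proof (intro bexI[OF _ DSadd[OF d1(1) d2(1)]] allI)
        fix x show "\<bar>f x + g x - (d1 x + d2 x)\<bar> < e" using d1(2)[rule_format, of x] d2(2)[rule_format, of x] by (rule half_tri1)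
      qed
    qed
  next
    fix f g assume f: "f \<in> R" and g: "g \<in> R"
    show "(\<lambda>x. f x * g x) \<in> R" unfolding R_def
    proof (intro CollectI conjI allI impI)
      show "continuous_on UNIV (\<lambda>x. f x * g x)" using f g by (auto simp: R_def intro!: continuous_intros)
      fix e :: real assume e: "e > 0"
      obtain Bf where Bf: "Bf \<ge> 0" "\<forall>x. \<bar>f x\<bar> \<le> Bf" using C0_bound[OF cpt, of f] f by (auto simp: R_def C0_def)
      obtain Bg where Bg: "Bg \<ge> 0" "\<forall>x. \<bar>g x\<bar> \<le> Bg" using C0_bound[OF cpt, of g] g by (auto simp: R_def C0_def)
      define \<delta> where "\<delta> = min 1 (e / (Bf + Bg + 2))"
      have \<delta>: "\<delta> > 0" "\<delta> \<le> 1" "\<delta> \<le> e / (Bf + Bg + 2)" using e Bf Bg by (auto simp: \<delta>_def)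
      obtain d1 where d1: "d1 \<in> DS" "\<forall>x. \<bar>f x - d1 x\<bar> < \<delta>" using Rap[OF f, of "\<delta>"] \<delta> by auto
      obtain d2 where d2: "d2 \<in> DS" "\<forall>x. \<bar>g x - d2 x\<bar> < \<delta>" using Rap[OF g, of "\<delta>"] \<delta> by auto
      have "(Bf + Bg + 1) * \<delta> < e"
      proof -
        have "(Bf + Bg + 1) * \<delta> \<le> (Bf + Bg + 1) * (e / (Bf + Bg + 2))"
          using \<delta> Bf Bg by (intro mult_left_mono) auto
        also have "\<dots> < (Bf + Bg + 2) * (e / (Bf + Bg + 2))"
          using e Bf Bg by (intro mult_strict_right_mono) auto
        also have "\<dots> = e" using Bf Bg by simp
        finally show ?thesis .
      qed
      show "\<exists>d\<in>DS. \<forall>x. \<bar>f x * g x - d x\<bar> < e"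
      proof (intro bexI[OF _ DSmult[OF d1(1) d2(1)]] allI)
        fix x
        have a: "\<bar>f x\<bar> \<le> Bf" "\<bar>g x - d2 x\<bar> < \<delta>" "\<bar>f x - d1 x\<bar> < \<delta>" "\<bar>g x\<bar> \<le> Bg" using Bf Bg d1 d2 by auto
        have b: "\<bar>d2 x\<bar> \<le> Bg + 1" using a \<delta> by linarith
        have "f x * g x - d1 x * d2 x = f x * (g x - d2 x) + d2 x * (f x - d1 x)" by (simp add: algebra_simps)
        then have "\<bar>f x * g x - d1 x * d2 x\<bar> \<le> \<bar>f x\<bar> * \<bar>g x - d2 x\<bar> + \<bar>d2 x\<bar> * \<bar>f x - d1 x\<bar>"
          by (metis abs_mult abs_triangle_ineq)
        also have "\<dots> \<le> Bf * \<delta> + (Bg + 1) * \<delta>"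
          using a b by (intro add_mono mult_mono) auto
        also have "\<dots> = (Bf + Bg + 1) * \<delta>" by (simp add: algebra_simps)
        finally show "\<bar>f x * g x - d1 x * d2 x\<bar> < e" using \<open>(Bf + Bg + 1) * \<delta> < e\<close> by linarith
      qed
    qed
  next
    fix c :: real
    show "(\<lambda>_. c) \<in> R" unfolding R_def
    proof (intro CollectI conjI allI impI)
      show "continuous_on UNIV (\<lambda>_::'a. c)" by simp
      fix e :: real assume e: "e > 0"
      obtain r where r: "r \<in> \<rat>" "c - e < r" "r < c + e" using Rats_dense_in_real[of "c - e" "c + e"] e by auto
      obtain q where "r = real_of_rat q" using r(1) Rats_cases by blast
      then show "\<exists>d\<in>DS. \<forall>x. \<bar>c - d x\<bar> < e" using DSq[of q] r by (intro bexI[of _ "\<lambda>x. real_of_rat q"]) auto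
    qed
  next
    fix x y :: 'a assume "x \<noteq> y"
    then obtain g where g: "g \<in> G" "g x \<noteq> g y" using G(3) by auto
    then show "\<exists>f\<in>R. f x \<noteq> f y" using DSG DSR by (intro bexI[of _ g]) auto
  qed
  have dense: "\<exists>d\<in>DS. \<forall>x. \<bar>f x - d x\<bar> < e" if f: "f \<in> C0" and e: "e > 0" for f e
  proof -
    obtain g where g: "g \<in> R" "\<forall>x\<in>UNIV. \<bar>f x - g x\<bar> < e/2"
      using Stone_Weierstrass_basic[of f "e/2"] f e by (auto simp: C0_def)
    then obtain d where d: "d \<in> DS" "\<forall>x. \<bar>g x - d x\<bar> < e/2" using Rap[OF g(1), of "e/2"] e by auto
    show ?thesis
    proof (intro bexI[OF _ d(1)] allI)
      fix x show "\<bar>f x - d x\<bar> < e" using g(2)[rule_format, of x] d(2)[rule_format, of x] by (simp add: half_tri2)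
    qed
  qed
  have ne: "DS \<noteq> {}" using DSq by blast
  define D where "D = from_nat_into DS"
  show ?thesis
  proof (intro exI[of _ D] conjI ballI allI impI)
    fix j show "D j \<in> C0" using from_nat_into[OF ne, of j] DSC0 unfolding D_def by blast
  next
    fix f :: "'a \<Rightarrow> real" and e :: real assume "f \<in> C0" "e > 0"
    then obtain d where "d \<in> DS" "\<forall>x. \<bar>f x - d x\<bar> < e" using dense by blast
    moreover obtain j where "from_nat_into DS j = d" using from_nat_into_surj[OF DSc \<open>d \<in> DS\<close>] by blast
    ultimately show "\<exists>j. \<forall>x. \<bar>f x - D j x\<bar> < e" unfolding D_def by auto
  qed
qed



lemma radonD:
  assumes "\<mu> \<in> radon_measures"
  shows "sets \<mu> = sets borel" "space \<mu> = UNIV" "finite_measure \<mu>" "measure \<mu> UNIV > 0"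
proof -
  show s: "sets \<mu> = sets borel" using assms by (simp add: radon_measures_def)
  show sp: "space \<mu> = UNIV" using sets_eq_imp_space_eq[OF s] by simp
  show f: "finite_measure \<mu>" using assms by (simp add: radon_measures_def)
  have "emeasure \<mu> UNIV \<noteq> 0" using assms by (simp add: radon_measures_def)
  then show "measure \<mu> UNIV > 0"
    using finite_measure.emeasure_eq_measure[OF f, of UNIV]
    by (metis ennreal_0 measure_nonneg order_le_less)
qed

lemma C0_const[simp]: "(\<lambda>x. c) \<in> C0" by (simp add: C0_def)

lemma C0_diff: "f \<in> C0 \<Longrightarrow> g \<in> C0 \<Longrightarrow> (\<lambda>x. f x - g x) \<in> C0"
  by (auto simp: C0_def intro!: continuous_intros)

lemma C0_add: "f \<in> C0 \<Longrightarrow> g \<in> C0 \<Longrightarrow> (\<lambda>x. f x + g x) \<in> C0"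
  by (auto simp: C0_def intro!: continuous_intros)

lemma C0_cmult: "f \<in> C0 \<Longrightarrow> (\<lambda>x. c * f x) \<in> C0"
  by (auto simp: C0_def intro!: continuous_intros)

lemma C0_sum: "(\<And>l. l \<in> L \<Longrightarrow> h l \<in> C0) \<Longrightarrow> (\<lambda>x. \<Sum>l\<in>L. h l x) \<in> C0"
  by (auto simp: C0_def intro!: continuous_intros)

definition Nf :: "'a::topological_space measure \<Rightarrow> ('a \<Rightarrow> real) \<Rightarrow> real" where
  "Nf \<mu> f = (1 / measure \<mu> UNIV) * (\<integral>x. f x \<partial>\<mu>)"

lemma radon_integrable:
  assumes "compact (UNIV::'a::topological_space set)" "f \<in> C0" "\<mu> \<in> radon_measures"
  shows "integrable \<mu> (f::'a \<Rightarrow> real)"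
  using fin_integrable[OF assms(1,2) radonD(1,3)[OF assms(3)]] .

lemma integral_diff_const:
  assumes "compact (UNIV::'a::topological_space set)" "(f::'a \<Rightarrow> real) \<in> C0" "\<mu> \<in> radon_measures"
  shows "(\<integral>x. f x - c \<partial>\<mu>) = (\<integral>x. f x \<partial>\<mu>) - c * measure \<mu> UNIV"
proof -
  have "(\<integral>x. f x - c \<partial>\<mu>) = (\<integral>x. f x \<partial>\<mu>) - (\<integral>x. c \<partial>\<mu>)"
    by (rule Bochner_Integration.integral_diff[OF radon_integrable[OF assms] finite_measure.integrable_const[OF radonD(3)[OF assms(3)]]])
  then show ?thesis using radonD(2)[OF assms(3)] by (simp add: mult.commute)
qed

lemma Nf_diff:
  fixes \<mu> :: "'a::topological_space measure"
  assumes "compact (UNIV::'a set)" "f \<in> C0" "g \<in> C0" "\<mu> \<in> radon_measures"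
  shows "Nf \<mu> (\<lambda>x. f x - g x) = Nf \<mu> f - Nf \<mu> g"
  unfolding Nf_def
  using Bochner_Integration.integral_diff[OF radon_integrable[OF assms(1,2,4)] radon_integrable[OF assms(1,3,4)]]
  by (simp add: right_diff_distrib)

lemma Nf_cmult:
  fixes \<mu> :: "'a::topological_space measure"
  assumes "compact (UNIV::'a set)" "(f::'a \<Rightarrow> real) \<in> C0" "\<mu> \<in> radon_measures"
  shows "Nf \<mu> (\<lambda>x. c * f x) = c * Nf \<mu> f"
  unfolding Nf_def using radon_integrable[OF assms] by simp

lemma Nf_sum:
  fixes \<mu> :: "'a::topological_space measure"
  assumes "compact (UNIV::'a set)" "\<And>l. l \<in> L \<Longrightarrow> h l \<in> C0" "\<mu> \<in> radon_measures"
  shows "Nf \<mu> (\<lambda>x. \<Sum>l\<in>L. h l x) = (\<Sum>l\<in>L. Nf \<mu> (h l))"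
  unfolding Nf_def
  using Bochner_Integration.integral_sum[of L \<mu> h] radon_integrable[OF assms(1) assms(2) assms(3)] assms(2)
  by (simp add: sum_distrib_left)

lemma Nf_const:
  assumes "\<mu> \<in> radon_measures"
  shows "Nf \<mu> (\<lambda>x. c) = c"
  unfolding Nf_def using radonD[OF assms] by simp

lemma Nf_bound:
  fixes \<mu> :: "'a::topological_space measure"
  assumes "compact (UNIV::'a set)" "(f::'a \<Rightarrow> real) \<in> C0" "\<mu> \<in> radon_measures" "\<And>x. \<bar>f x\<bar> \<le> b"
  shows "\<bar>Nf \<mu> f\<bar> \<le> b"
proof -
  have m: "measure \<mu> UNIV > 0" using radonD[OF assms(3)] by simp
  have "\<bar>\<integral>x. f x \<partial>\<mu>\<bar> \<le> (\<integral>x. \<bar>f x\<bar> \<partial>\<mu>)"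
    using integral_norm_bound[of \<mu> f] by simp
  also have "\<dots> \<le> (\<integral>x. b \<partial>\<mu>)"
    using radon_integrable[OF assms(1) _ assms(3), of "\<lambda>x. \<bar>f x\<bar>"] assms(2,4)
      finite_measure.integrable_const[OF radonD(3)[OF assms(3)]]
    by (intro integral_mono) (auto simp: C0_def intro!: continuous_intros)
  also have "\<dots> = b * measure \<mu> UNIV" using radonD(2)[OF assms(3)] by (simp add: mult.commute)
  finally have "\<bar>\<integral>x. f x \<partial>\<mu>\<bar> \<le> b * measure \<mu> UNIV" .
  then show ?thesis using m unfolding Nf_def by (simp add: abs_mult divide_le_eq)
qed



primrec Sv :: "(('a \<Rightarrow> real) \<Rightarrow> 'b) \<Rightarrow> (nat \<Rightarrow> 'b \<Rightarrow> real) \<Rightarrow> (nat \<Rightarrow> 'a \<Rightarrow> real) \<Rightarrow> nat \<Rightarrow> nat \<Rightarrow> real" where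
  "Sv ch V e 0 = (\<lambda>j. 0)"
| "Sv ch V e (Suc k) = (\<lambda>j. Sv ch V e k j + V j (ch (\<lambda>x. \<Sum>l<k. Sv ch V e k l * e l x)))"

lemma geo_half_eq: "(\<Sum>j<k. (1/2::real)^j) = 2 - 2 * (1/2)^k"
  by (induction k) (auto simp: field_simps)

lemma geo_half: "(\<Sum>j<k. (1/2::real)^j) \<le> 2"
  using geo_half_eq[of k] by simp

lemma sq_bound_aux: "\<bar>v\<bar> \<le> a \<Longrightarrow> a \<le> 1 \<Longrightarrow> a \<le> b \<Longrightarrow> v\<^sup>2 \<le> (b::real)"
proof -
  assume "\<bar>v\<bar> \<le> a" "a \<le> 1" "a \<le> b"
  then have "\<bar>v\<bar> * \<bar>v\<bar> \<le> a * 1" by (intro mult_mono) auto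
  then show "v\<^sup>2 \<le> b" using \<open>a \<le> b\<close> by (simp add: power2_eq_square abs_mult[symmetric])
qed

lemma tri3: "\<bar>a - b\<bar> \<le> r/3 \<Longrightarrow> \<bar>b - c\<bar> < r/3 \<Longrightarrow> \<bar>c - d\<bar> \<le> r/3 \<Longrightarrow> \<bar>a - d\<bar> < (r::real)"
  by arith

lemma herding:
  fixes \<mu>0 :: "'a::{t2_space,second_countable_topology} measure" and Y :: "'a measure set"
  assumes cpt: "compact (UNIV::'a set)" and \<mu>0: "\<mu>0 \<in> radon_measures" and YR: "Y \<subseteq> radon_measures"
    and star: "\<And>g. g \<in> C0 \<Longrightarrow> \<exists>\<mu>\<in>Y. Nf \<mu> g \<le> Nf \<mu>0 g"
  shows "\<exists>m. (\<forall>k. m k \<in> Y) \<and> (\<forall>f\<in>C0. (\<lambda>k. (1 / real k) * (\<Sum>i=1..k. Nf (m i) f)) \<longlonglongrightarrow> Nf \<mu>0 f)"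
proof -
  have "\<forall>g. \<exists>\<mu>. g \<in> C0 \<longrightarrow> \<mu> \<in> Y \<and> Nf \<mu> g \<le> Nf \<mu>0 g" using star by blast
  then obtain ch where ch0: "\<forall>g. g \<in> C0 \<longrightarrow> ch g \<in> Y \<and> Nf (ch g) g \<le> Nf \<mu>0 g" by (rule choice[THEN exE])
  have ch: "ch g \<in> Y" "Nf (ch g) g \<le> Nf \<mu>0 g" if "g \<in> C0" for g using ch0 that by auto
  obtain D :: "nat \<Rightarrow> 'a \<Rightarrow> real" where D0: "(\<forall>j. D j \<in> C0) \<and> (\<forall>f\<in>C0. \<forall>e>0. \<exists>j. \<forall>x. \<bar>f x - D j x\<bar> < e)"
    using dense_family[OF cpt] by (elim exE) (rule that)
  have DC: "D j \<in> C0" for j using D0 by simp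
  have Dd: "\<exists>j. \<forall>x. \<bar>f x - D j x\<bar> < e" if "f \<in> C0" "e > 0" for f e
    using conjunct2[OF D0] that by simp
  have "\<forall>j. \<exists>b. b \<ge> 0 \<and> (\<forall>x. \<bar>D j x\<bar> \<le> b)" using C0_bound[OF cpt DC] by simp
  then obtain B where B0: "\<forall>j. B j \<ge> 0 \<and> (\<forall>x. \<bar>D j x\<bar> \<le> B j)" by (rule choice[THEN exE])
  have B: "B j \<ge> 0" "\<bar>D j x\<bar> \<le> B j" for j x using B0 by auto
  define w where "w j = 1 / ((real j + 1) * 2^(j+1) * (B j + 1))" for j
  define e where "e j = (\<lambda>x. w j * D j x)" for j
  define a where "a j = 1 / ((real j + 1) * 2^j)" for j :: nat
  have wpos: "w j > 0" for j using B(1)[of j] by (simp add: w_def)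
  have eC: "e j \<in> C0" for j unfolding e_def by (rule C0_cmult[OF DC])
  have ebd: "\<bar>e j x\<bar> \<le> a j / 2" for j x
  proof -
    have "\<bar>e j x\<bar> = w j * \<bar>D j x\<bar>" using wpos[of j] by (simp add: e_def abs_mult)
    also have "\<dots> \<le> w j * (B j + 1)" using B(2)[of j x] wpos[of j] by (intro mult_left_mono) auto
    also have "\<dots> = 1 / ((real j + 1) * 2^(j+1))" using B(1)[of j] by (simp add: w_def)
    also have "\<dots> = a j / 2" by (simp add: a_def)
    finally show ?thesis .
  qed
  have a_le: "a j \<le> (1/2)^j" "a j \<le> 1" "a j \<ge> 0" for j
  proof -
    have "a j = (1/2)^j / (real j + 1)" by (simp add: a_def field_simps)
    also have "\<dots> \<le> (1/2)^j / 1" by (intro divide_left_mono) auto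
    also have "\<dots> = (1/2)^j" by simp
    finally show "a j \<le> (1/2)^j" .
    also have "(1/2::real)^j \<le> 1" by (simp add: power_le_one)
    finally show "a j \<le> 1" .
    show "a j \<ge> 0" by (simp add: a_def)
  qed
  define V where "V j \<mu> = Nf \<mu> (e j) - Nf \<mu>0 (e j)" for j \<mu>
  have Vbd: "\<bar>V j \<mu>\<bar> \<le> a j" if "\<mu> \<in> radon_measures" for j \<mu>
  proof -
    have "\<bar>Nf \<mu> (e j)\<bar> \<le> a j / 2" by (rule Nf_bound[OF cpt eC that ebd])
    moreover have "\<bar>Nf \<mu>0 (e j)\<bar> \<le> a j / 2" by (rule Nf_bound[OF cpt eC \<mu>0 ebd])
    ultimately show ?thesis unfolding V_def by arith
  qed
  define S where "S = Sv ch V e"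
  define m where "m k = ch (\<lambda>x. \<Sum>l<(k-1). S (k-1) l * e l x)" for k
  have GC: "(\<lambda>x. \<Sum>l<k. S k l * e l x) \<in> C0" for k by (rule C0_sum) (rule C0_cmult[OF eC])
  have mY: "m k \<in> Y" for k using ch(1)[OF GC[of "k-1"]] by (simp add: m_def)
  have mR: "m k \<in> radon_measures" for k using mY YR by blast
  have Ssuc: "S (Suc k) j = S k j + V j (m (Suc k))" for k j by (simp add: S_def m_def)
  have Ssum: "S k j = (\<Sum>i=1..k. V j (m i))" for k j
  proof (induction k)
    case 0 then show ?case by (simp add: S_def)
  next
    case (Suc k) then show ?case by (simp add: Ssuc)
  qed
  have cross: "(\<Sum>l<k. S k l * V l (m (Suc k))) \<le> 0" for k
  proof -
    let ?G = "\<lambda>x. \<Sum>l<k. S k l * e l x"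
    have mk: "m (Suc k) = ch ?G" by (simp add: m_def)
    have NG: "Nf \<mu> ?G = (\<Sum>l<k. S k l * Nf \<mu> (e l))" if "\<mu> \<in> radon_measures" for \<mu>
    proof -
      have "Nf \<mu> ?G = (\<Sum>l<k. Nf \<mu> (\<lambda>x. S k l * e l x))"
        by (rule Nf_sum[OF cpt _ that]) (rule C0_cmult[OF eC])
      also have "\<dots> = (\<Sum>l<k. S k l * Nf \<mu> (e l))"
        by (intro sum.cong refl Nf_cmult[OF cpt eC that])
      finally show ?thesis .
    qed
    have "(\<Sum>l<k. S k l * V l (m (Suc k))) = Nf (m (Suc k)) ?G - Nf \<mu>0 ?G"
      using NG[OF mR[of "Suc k"]] NG[OF \<mu>0] by (simp add: V_def right_diff_distrib sum_subtractf)
    also have "\<dots> \<le> 0" using ch(2)[OF GC[of k]] mk by simp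
    finally show ?thesis .
  qed
  define T where "T k = (\<Sum>j<k. (S k j)\<^sup>2)" for k
  have Tstep: "T (Suc k) \<le> T k + 3" for k
  proof -
    let ?v = "\<lambda>j. V j (m (Suc k))"
    have t1: "T (Suc k) = (\<Sum>j<k. (S (Suc k) j)\<^sup>2) + (S (Suc k) k)\<^sup>2" by (simp add: T_def)
    have t2: "(\<Sum>j<k. (S (Suc k) j)\<^sup>2) = T k + 2 * (\<Sum>j<k. S k j * ?v j) + (\<Sum>j<k. (?v j)\<^sup>2)"
      by (simp add: T_def Ssuc power2_sum sum.distrib sum_distrib_left mult.assoc)
    have t3: "(\<Sum>j<k. (?v j)\<^sup>2) \<le> 2"
    proof -
      have "(\<Sum>j<k. (?v j)\<^sup>2) \<le> (\<Sum>j<k. (1/2::real)^j)"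
        by (intro sum_mono sq_bound_aux[OF Vbd[OF mR] a_le(2) a_le(1)])
      then show ?thesis using geo_half[of k] by linarith
    qed
    have t4: "(S (Suc k) k)\<^sup>2 \<le> 1"
    proof -
      have "\<bar>S (Suc k) k\<bar> \<le> (\<Sum>i=1..Suc k. \<bar>V k (m i)\<bar>)" unfolding Ssum by (rule sum_abs)
      also have "\<dots> \<le> real (card {1..Suc k}) * a k" by (rule sum_bounded_above) (rule Vbd[OF mR])
      also have "\<dots> = (1/2)^k"
      proof -
        have "(0::real) < 2 ^ k + real k * 2 ^ k" by (simp add: add_pos_nonneg)
        then have "2 ^ k + real k * 2 ^ k \<noteq> (0::real)" by simp
        then show ?thesis by (simp add: a_def field_simps power_one_over)
      qed
      also have "\<dots> \<le> 1" by (simp add: power_le_one)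
      finally show ?thesis by (simp add: abs_square_le_1)
    qed
    show ?thesis using t1 t2 t3 t4 cross[of k] by linarith
  qed
  have Tbd: "T k \<le> 3 * real k" for k
  proof (induction k)
    case 0 then show ?case by (simp add: T_def)
  next
    case (Suc k) then show ?case using Tstep[of k] by simp
  qed
  have Sbd: "(S k j)\<^sup>2 \<le> 3 * real k" if "j < k" for j k
  proof -
    have "(S k j)\<^sup>2 \<le> T k" unfolding T_def by (rule member_le_sum) (use that in auto)
    then show ?thesis using Tbd[of k] by linarith
  qed
  have Slim: "(\<lambda>k. S k j / real k) \<longlonglongrightarrow> 0" for j
  proof (rule LIMSEQ_I)
    fix r :: real assume r: "r > 0"
    obtain n0 :: nat where n0: "3 / r\<^sup>2 < real n0" using reals_Archimedean2 by blast
    show "\<exists>no. \<forall>n\<ge>no. norm (S n j / real n - 0) < r"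
    proof (intro exI allI impI)
      fix n assume n: "n \<ge> max (Suc j) n0"
      then have jn: "j < n" and npos: "real n > 0" and nn0: "real n0 \<le> real n" by auto
      have "(S n j / real n)\<^sup>2 = (S n j)\<^sup>2 / (real n)\<^sup>2" by (simp add: power_divide)
      also have "\<dots> \<le> 3 * real n / (real n)\<^sup>2" using Sbd[OF jn] npos by (intro divide_right_mono) auto
      also have "\<dots> = 3 / real n" using npos by (simp add: power2_eq_square)
      also have "\<dots> < r\<^sup>2"
      proof -
        have "3 / r\<^sup>2 < real n" using n0 nn0 by linarith
        then show ?thesis using r npos by (simp add: field_simps)
      qed
      finally have "\<bar>S n j / real n\<bar>\<^sup>2 < r\<^sup>2" by (simp only: power2_abs)
      then have "\<bar>S n j / real n\<bar> < r" using power2_less_imp_less[of "\<bar>S n j / real n\<bar>" r] r by simp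
      then show "norm (S n j / real n - 0) < r" by simp
    qed
  qed
  have avgD: "(\<lambda>k. (1 / real k) * (\<Sum>i=1..k. Nf (m i) (D j))) \<longlonglongrightarrow> Nf \<mu>0 (D j)" for j
  proof -
    have Ve: "V j (m i) = w j * (Nf (m i) (D j) - Nf \<mu>0 (D j))" for i
      unfolding V_def e_def using Nf_cmult[OF cpt DC mR] Nf_cmult[OF cpt DC \<mu>0] by (simp add: right_diff_distrib)
    have eq: "(1 / real k) * (\<Sum>i=1..k. Nf (m i) (D j)) = (S k j / real k) / w j + Nf \<mu>0 (D j)" if "k \<ge> 1" for k
    proof -
      have "S k j = w j * ((\<Sum>i=1..k. Nf (m i) (D j)) - real k * Nf \<mu>0 (D j))"
        unfolding Ssum Ve by (simp add: sum_distrib_left[symmetric] sum_subtractf)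
      then show ?thesis using that wpos[of j] by (simp add: field_simps)
    qed
    have "(\<lambda>k. (S k j / real k) / w j + Nf \<mu>0 (D j)) \<longlonglongrightarrow> 0 / w j + Nf \<mu>0 (D j)"
      using wpos[of j] by (intro tendsto_intros Slim) simp
    then have "(\<lambda>k. (S k j / real k) / w j + Nf \<mu>0 (D j)) \<longlonglongrightarrow> Nf \<mu>0 (D j)" by simp
    moreover have "eventually (\<lambda>k. (S k j / real k) / w j + Nf \<mu>0 (D j) = (1 / real k) * (\<Sum>i=1..k. Nf (m i) (D j))) sequentially"
      using eq eventually_sequentially by (metis (mono_tags, lifting))
    ultimately show ?thesis by (rule Lim_transform_eventually)
  qed
  have final: "(\<lambda>k. (1 / real k) * (\<Sum>i=1..k. Nf (m i) f)) \<longlonglongrightarrow> Nf \<mu>0 f" if f: "f \<in> C0" for f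
  proof (rule LIMSEQ_I)
    fix r :: real assume r: "r > 0"
    have "r/3 > 0" using r by simp
    from Dd[OF f this] obtain j where j: "\<forall>x. \<bar>f x - D j x\<bar> < r/3" by (elim exE)
    have fD: "(\<lambda>x. f x - D j x) \<in> C0" by (rule C0_diff[OF f DC])
    have jle: "\<bar>f x - D j x\<bar> \<le> r/3" for x using j by (simp add: less_imp_le)
    obtain N where N: "\<forall>n\<ge>N. norm ((1 / real n) * (\<Sum>i=1..n. Nf (m i) (D j)) - Nf \<mu>0 (D j)) < r/3"
      using LIMSEQ_D[OF avgD[of j], of "r/3"] r by auto
    show "\<exists>no. \<forall>n\<ge>no. norm ((1 / real n) * (\<Sum>i=1..n. Nf (m i) f) - Nf \<mu>0 f) < r"
    proof (intro exI allI impI)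
      fix n assume n: "n \<ge> N"
      have d1: "\<bar>(1 / real n) * (\<Sum>i=1..n. Nf (m i) f) - (1 / real n) * (\<Sum>i=1..n. Nf (m i) (D j))\<bar> \<le> r/3"
      proof -
        have "(\<Sum>i=1..n. Nf (m i) f) - (\<Sum>i=1..n. Nf (m i) (D j)) = (\<Sum>i=1..n. Nf (m i) (\<lambda>x. f x - D j x))"
          by (simp add: sum_subtractf[symmetric] Nf_diff[OF cpt f DC mR])
        moreover have "\<bar>\<Sum>i=1..n. Nf (m i) (\<lambda>x. f x - D j x)\<bar> \<le> real n * (r/3)"
        proof -
          have "\<bar>\<Sum>i=1..n. Nf (m i) (\<lambda>x. f x - D j x)\<bar> \<le> (\<Sum>i=1..n. \<bar>Nf (m i) (\<lambda>x. f x - D j x)\<bar>)" by (rule sum_abs)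
          also have "\<dots> \<le> real (card {1..n}) * (r/3)"
            by (rule sum_bounded_above) (rule Nf_bound[OF cpt fD mR jle])
          finally show ?thesis by simp
        qed
        ultimately have "\<bar>(\<Sum>i=1..n. Nf (m i) f) - (\<Sum>i=1..n. Nf (m i) (D j))\<bar> \<le> real n * (r/3)" by simp
        then have "(1 / real n) * \<bar>(\<Sum>i=1..n. Nf (m i) f) - (\<Sum>i=1..n. Nf (m i) (D j))\<bar> \<le> (1 / real n) * (real n * (r/3))"
          by (intro mult_left_mono) auto
        also have "\<dots> \<le> r/3" using r by (cases "n = 0") auto
        finally have fin: "(1 / real n) * \<bar>(\<Sum>i=1..n. Nf (m i) f) - (\<Sum>i=1..n. Nf (m i) (D j))\<bar> \<le> r/3" .
        have "(1 / real n) * (\<Sum>i=1..n. Nf (m i) f) - (1 / real n) * (\<Sum>i=1..n. Nf (m i) (D j))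
              = (1 / real n) * ((\<Sum>i=1..n. Nf (m i) f) - (\<Sum>i=1..n. Nf (m i) (D j)))"
          by (simp only: right_diff_distrib)
        moreover have "\<bar>(1 / real n) * ((\<Sum>i=1..n. Nf (m i) f) - (\<Sum>i=1..n. Nf (m i) (D j)))\<bar>
              = (1 / real n) * \<bar>(\<Sum>i=1..n. Nf (m i) f) - (\<Sum>i=1..n. Nf (m i) (D j))\<bar>"
          by (simp only: abs_mult) simp
        ultimately show ?thesis using fin by simp
      qed
      have d2: "\<bar>(1 / real n) * (\<Sum>i=1..n. Nf (m i) (D j)) - Nf \<mu>0 (D j)\<bar> < r/3" using N n by simp
      have d3: "\<bar>Nf \<mu>0 (D j) - Nf \<mu>0 f\<bar> \<le> r/3"
      proof -
        have "\<bar>Nf \<mu>0 (\<lambda>x. f x - D j x)\<bar> \<le> r/3" by (rule Nf_bound[OF cpt fD \<mu>0 jle])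
        then show ?thesis using Nf_diff[OF cpt f DC \<mu>0, of j] by (simp add: abs_minus_commute)
      qed
      show "norm ((1 / real n) * (\<Sum>i=1..n. Nf (m i) f) - Nf \<mu>0 f) < r"
        using tri3[OF d1 d2 d3] by (simp only: real_norm_def)
    qed
  qed
  show ?thesis using mY final by blast
qed



lemma ws_topspace: "topspace weak_star_topology = radon_measures"
proof -
  have mem: "radon_measures \<in> {{\<mu> \<in> radon_measures. (\<integral>x. f x \<partial>\<mu>) \<in> U} | f U. f \<in> C0 \<and> open U}"
    by (rule CollectI, rule exI[of _ "\<lambda>x. 0"], rule exI[of _ UNIV]) simp
  have "\<Union>{{\<mu> \<in> radon_measures. (\<integral>x. f x \<partial>\<mu>) \<in> U} | f U. f \<in> C0 \<and> open U} = radon_measures"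
  proof
    show "radon_measures \<subseteq> \<Union>{{\<mu> \<in> radon_measures. (\<integral>x. f x \<partial>\<mu>) \<in> U} | f U. f \<in> C0 \<and> open U}"
      using mem by (rule Union_upper)
  qed auto
  then show ?thesis unfolding weak_star_topology_def topology_generated_by_topspace .
qed

lemma ws_open:
  assumes "f \<in> C0" "open U"
  shows "openin weak_star_topology {\<mu> \<in> radon_measures. (\<integral>x. f x \<partial>\<mu>) \<in> U}"
  unfolding weak_star_topology_def using assms by (intro topology_generated_by_Basis) blast

lemma ws_eventually:
  fixes \<nu> :: "nat \<Rightarrow> 'a::topological_space measure"
  assumes T: "openin weak_star_topology T" and x: "\<mu>0 \<in> T"
    and conv: "\<And>f. f \<in> C0 \<Longrightarrow> (\<lambda>k. (\<integral>x. f x \<partial>\<nu> k)) \<longlonglongrightarrow> (\<integral>x. f x \<partial>\<mu>0)"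
    and R: "eventually (\<lambda>k. \<nu> k \<in> radon_measures) sequentially"
  shows "eventually (\<lambda>k. \<nu> k \<in> T) sequentially"
proof -
  have "generate_topology_on {{\<mu> \<in> radon_measures. (\<integral>x. f x \<partial>\<mu>) \<in> U} | f U. f \<in> C0 \<and> open U} T"
    using T unfolding weak_star_topology_def by (rule openin_topology_generated_by)
  then show ?thesis using x
  proof (induction rule: generate_topology_on.induct)
    case Empty then show ?case by simp
  next
    case (Int a b)
    then have "eventually (\<lambda>n. \<nu> n \<in> a) sequentially" "eventually (\<lambda>n. \<nu> n \<in> b) sequentially" by auto
    then show ?case by (auto elim: eventually_elim2)
  next
    case (UN K)
    then obtain k where k: "k \<in> K" "\<mu>0 \<in> k" by blast
    then have "eventually (\<lambda>n. \<nu> n \<in> k) sequentially" using UN.IH by blast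
    then show ?case by (rule eventually_mono) (use k in blast)
  next
    case (Basis s)
    then obtain f U where fU: "s = {\<mu> \<in> radon_measures. (\<integral>x. f x \<partial>\<mu>) \<in> U}" "f \<in> C0" "open U" by blast
    have "(\<integral>x. f x \<partial>\<mu>0) \<in> U" using Basis.prems fU by blast
    then have "eventually (\<lambda>k. (\<integral>x. f x \<partial>\<nu> k) \<in> U) sequentially"
      using topological_tendstoD[OF conv[OF fU(2)] fU(3)] by blast
    then show ?case using R unfolding fU(1) by (auto elim: eventually_elim2)
  qed
qed

lemma scale_facts:
  fixes \<mu> :: "'a::topological_space measure"
  assumes cpt: "compact (UNIV::'a set)" and \<mu>: "\<mu> \<in> radon_measures" and l: "l > 0"
  shows "scale_measure (ennreal l) \<mu> \<in> radon_measures"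
    and "\<And>f. f \<in> C0 \<Longrightarrow> (\<integral>x. f x \<partial>scale_measure (ennreal l) \<mu>) = l * (\<integral>x. f x \<partial>\<mu>)"
proof -
  let ?s = "scale_measure (ennreal l) \<mu>"
  have s: "sets ?s = sets borel" using radonD(1)[OF \<mu>] by simp
  have em: "\<And>A. A \<in> sets borel \<Longrightarrow> emeasure ?s A = (\<Sum>i\<in>{0::nat}. ennreal ((\<lambda>_. l) i) * emeasure ((\<lambda>_. \<mu>) i) A)"
    by simp
  have fin: "finite_measure ?s"
    by (rule mix_int(1)[OF cpt C0_const, of "{0::nat}" ?s "\<lambda>_. \<mu>" "\<lambda>_. l"])
       (use s radonD[OF \<mu>] l em in auto)
  show "\<And>f. f \<in> C0 \<Longrightarrow> (\<integral>x. f x \<partial>?s) = l * (\<integral>x. f x \<partial>\<mu>)"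
  proof -
    fix f :: "'a \<Rightarrow> real" assume f: "f \<in> C0"
    have "(\<integral>x. f x \<partial>?s) = (\<Sum>i\<in>{0::nat}. l * (\<integral>x. f x \<partial>\<mu>))"
      by (rule mix_int(2)[OF cpt f, of "{0::nat}" ?s "\<lambda>_. \<mu>" "\<lambda>_. l"])
         (use s radonD[OF \<mu>] l em in auto)
    then show "(\<integral>x. f x \<partial>?s) = l * (\<integral>x. f x \<partial>\<mu>)" by simp
  qed
  have "emeasure \<mu> UNIV \<noteq> 0" using \<mu> by (simp add: radon_measures_def)
  then have "emeasure ?s UNIV \<noteq> 0" using l by simp
  then show "?s \<in> radon_measures" using s fin by (simp add: radon_measures_def)
qed

lemma pos_cone_facts:
  fixes Y :: "'a::topological_space measure set"
  assumes cpt: "compact (UNIV::'a set)" and YR: "Y \<subseteq> radon_measures" and \<nu>: "\<nu> \<in> pos_cone Y"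
  shows "\<nu> \<in> radon_measures" "\<exists>l \<mu>. l > 0 \<and> \<mu> \<in> Y \<and> (\<forall>f\<in>C0. (\<integral>x. f x \<partial>\<nu>) = l * (\<integral>x. f x \<partial>\<mu>))"
proof -
  obtain l \<mu> where l: "\<nu> = scale_measure (ennreal l) \<mu>" "l > 0" "\<mu> \<in> Y" using \<nu> unfolding pos_cone_def by blast
  have \<mu>R: "\<mu> \<in> radon_measures" using l YR by blast
  show "\<nu> \<in> radon_measures" using scale_facts(1)[OF cpt \<mu>R l(2)] l(1) by simp
  show "\<exists>l \<mu>. l > 0 \<and> \<mu> \<in> Y \<and> (\<forall>f\<in>C0. (\<integral>x. f x \<partial>\<nu>) = l * (\<integral>x. f x \<partial>\<mu>))"
    using scale_facts(2)[OF cpt \<mu>R l(2)] l by blast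
qed



theorem theoremB1:
  fixes Y :: "('a::{t2_space, second_countable_topology}) measure set"
    and \<mu>0 :: "'a measure"
  assumes "compact (UNIV :: 'a set)"
    and "Y \<noteq> {}"
    and "compactin weak_star_topology Y"
    and "\<mu>0 \<in> radon_measures"
  shows "((\<forall>f\<in>C0. (\<integral>x. f x \<partial>\<mu>0) < 0 \<longrightarrow> (\<exists>\<mu>\<in>Y. (\<integral>x. f x \<partial>\<mu>) \<le> 0))
          \<longleftrightarrow> (\<forall>f\<in>C0. (\<integral>x. f x \<partial>\<mu>0) = 0 \<longrightarrow> (\<exists>\<mu>\<in>Y. (\<integral>x. f x \<partial>\<mu>) \<le> 0)))
       \<and> ((\<forall>f\<in>C0. (\<integral>x. f x \<partial>\<mu>0) = 0 \<longrightarrow> (\<exists>\<mu>\<in>Y. (\<integral>x. f x \<partial>\<mu>) \<le> 0))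
          \<longleftrightarrow> \<mu>0 \<in> weak_star_topology closure_of (meas_convex_hull (pos_cone Y)))
       \<and> (\<mu>0 \<in> weak_star_topology closure_of (meas_convex_hull (pos_cone Y))
          \<longleftrightarrow> (\<exists>m :: nat \<Rightarrow> 'a measure. (\<forall>k. m k \<in> Y) \<and>
                (\<forall>f\<in>C0. (\<lambda>k. (1 / real k) * (\<Sum>i=1..k. (1 / measure (m i) UNIV) * (\<integral>x. f x \<partial>m i)))
                   \<longlonglongrightarrow> (1 / measure \<mu>0 UNIV) * (\<integral>x. f x \<partial>\<mu>0))))"
proof -
  note cpt = assms(1)
  have YR: "Y \<subseteq> radon_measures" using compactin_subset_topspace[OF assms(3)] unfolding ws_topspace .
  have \<mu>0: "\<mu>0 \<in> radon_measures" by (rule assms(4))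
  have m0: "measure \<mu>0 UNIV > 0" using radonD(4)[OF \<mu>0] .
  define P1 where "P1 = (\<forall>f\<in>C0. (\<integral>x. f x \<partial>\<mu>0) < 0 \<longrightarrow> (\<exists>\<mu>\<in>Y. (\<integral>x. f x \<partial>\<mu>) \<le> 0))"
  define P2 where "P2 = (\<forall>f\<in>C0. (\<integral>x. f x \<partial>\<mu>0) = 0 \<longrightarrow> (\<exists>\<mu>\<in>Y. (\<integral>x. f x \<partial>\<mu>) \<le> 0))"
  define P3 where "P3 = (\<mu>0 \<in> weak_star_topology closure_of (meas_convex_hull (pos_cone Y)))"
  define P4 where "P4 = (\<exists>m :: nat \<Rightarrow> 'a measure. (\<forall>k. m k \<in> Y) \<and>
                (\<forall>f\<in>C0. (\<lambda>k. (1 / real k) * (\<Sum>i=1..k. (1 / measure (m i) UNIV) * (\<integral>x. f x \<partial>m i)))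
                   \<longlonglongrightarrow> (1 / measure \<mu>0 UNIV) * (\<integral>x. f x \<partial>\<mu>0)))"

  have h21: "P1" if P2: "P2"
    unfolding P1_def
  proof (intro ballI impI)
    fix f :: "'a \<Rightarrow> real" assume f: "f \<in> C0" and neg: "(\<integral>x. f x \<partial>\<mu>0) < 0"
    define c where "c = (\<integral>x. f x \<partial>\<mu>0) / measure \<mu>0 UNIV"
    have cneg: "c < 0" using neg m0 by (simp add: c_def divide_neg_pos)
    have gC: "(\<lambda>x. f x - c) \<in> C0" by (rule C0_diff[OF f C0_const])
    have "(\<integral>x. f x - c \<partial>\<mu>0) = 0"
      using integral_diff_const[OF cpt f \<mu>0, of c] m0 by (simp add: c_def)
    then obtain \<mu> where \<mu>: "\<mu> \<in> Y" "(\<integral>x. f x - c \<partial>\<mu>) \<le> 0" using P2 gC unfolding P2_def by blast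
    have \<mu>R: "\<mu> \<in> radon_measures" using \<mu>(1) YR by blast
    have "(\<integral>x. f x \<partial>\<mu>) \<le> c * measure \<mu> UNIV" using \<mu>(2) integral_diff_const[OF cpt f \<mu>R, of c] by simp
    moreover have "c * measure \<mu> UNIV < 0" using cneg radonD(4)[OF \<mu>R] by (simp add: mult_neg_pos)
    ultimately show "\<exists>\<mu>\<in>Y. (\<integral>x. f x \<partial>\<mu>) \<le> 0" using \<mu>(1) by force
  qed

  have h12: "P2" if P1: "P1"
    unfolding P2_def
  proof (intro ballI impI)
    fix f :: "'a \<Rightarrow> real" assume f: "f \<in> C0" and z: "(\<integral>x. f x \<partial>\<mu>0) = 0"
    show "\<exists>\<mu>\<in>Y. (\<integral>x. f x \<partial>\<mu>) \<le> 0"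
    proof (rule ccontr)
      assume "\<not> (\<exists>\<mu>\<in>Y. (\<integral>x. f x \<partial>\<mu>) \<le> 0)"
      then have pos: "\<And>\<mu>. \<mu> \<in> Y \<Longrightarrow> (\<integral>x. f x \<partial>\<mu>) > 0" by force
      define Ot where "Ot t = {\<mu> \<in> radon_measures. (\<integral>x. f x - t \<partial>\<mu>) \<in> {0<..}}" for t :: real
      have opn: "\<forall>B\<in>Ot ` {0<..}. openin weak_star_topology B"
        unfolding Ot_def using ws_open[OF C0_diff[OF f C0_const] open_greaterThan] by blast
      have cov: "Y \<subseteq> \<Union>(Ot ` {0<..})"
      proof
        fix \<mu> assume \<mu>: "\<mu> \<in> Y"
        then have \<mu>R: "\<mu> \<in> radon_measures" using YR by blast
        have mpos: "measure \<mu> UNIV > 0" using radonD(4)[OF \<mu>R] .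
        define t where "t = (\<integral>x. f x \<partial>\<mu>) / (2 * measure \<mu> UNIV)"
        have tpos: "t > 0" using pos[OF \<mu>] mpos by (simp add: t_def)
        have "(\<integral>x. f x - t \<partial>\<mu>) = (\<integral>x. f x \<partial>\<mu>) - t * measure \<mu> UNIV" by (rule integral_diff_const[OF cpt f \<mu>R])
        also have "\<dots> = (\<integral>x. f x \<partial>\<mu>) / 2" using mpos by (simp add: t_def)
        finally have "(\<integral>x. f x - t \<partial>\<mu>) > 0" using pos[OF \<mu>] by simp
        then have "\<mu> \<in> Ot t" using \<mu>R by (simp add: Ot_def)
        then show "\<mu> \<in> \<Union>(Ot ` {0<..})" using tpos by blast
      qed
      have "\<exists>F. finite F \<and> F \<subseteq> Ot ` {0<..} \<and> Y \<subseteq> \<Union>F"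
        using assms(3) opn cov unfolding compactin_def by blast
      then obtain F where F: "finite F" "F \<subseteq> Ot ` {0<..}" "Y \<subseteq> \<Union>F" by blast
      obtain T where T: "T \<subseteq> {0<..}" "finite T" "F = Ot ` T" using finite_subset_image[OF F(1) F(2)] by blast
      have Tne: "T \<noteq> {}" using F(3) T(3) assms(2) by auto
      define \<epsilon> where "\<epsilon> = Min T"
      have epos: "\<epsilon> > 0" using Min_in[OF T(2) Tne] T(1) unfolding \<epsilon>_def by auto
      have Ypos: "(\<integral>x. f x \<partial>\<mu>) - \<epsilon> * measure \<mu> UNIV > 0" if \<mu>: "\<mu> \<in> Y" for \<mu>
      proof -
        have \<mu>R: "\<mu> \<in> radon_measures" using \<mu> YR by blast
        obtain t where t: "t \<in> T" "\<mu> \<in> Ot t" using F(3) T(3) \<mu> by blast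
        have "(\<integral>x. f x \<partial>\<mu>) - t * measure \<mu> UNIV > 0"
          using t(2) integral_diff_const[OF cpt f \<mu>R, of t] by (simp add: Ot_def)
        moreover have "\<epsilon> \<le> t" using Min_le[OF T(2) t(1)] unfolding \<epsilon>_def .
        moreover have "measure \<mu> UNIV > 0" using radonD(4)[OF \<mu>R] .
        ultimately show ?thesis by (smt (verit) mult_right_mono)
      qed
      have gC: "(\<lambda>x. f x - \<epsilon>) \<in> C0" by (rule C0_diff[OF f C0_const])
      have "(\<integral>x. f x - \<epsilon> \<partial>\<mu>0) < 0"
        using integral_diff_const[OF cpt f \<mu>0, of \<epsilon>] z epos m0 by simp
      then obtain \<mu> where \<mu>: "\<mu> \<in> Y" "(\<integral>x. f x - \<epsilon> \<partial>\<mu>) \<le> 0" using P1 gC unfolding P1_def by blast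
      have \<mu>R: "\<mu> \<in> radon_measures" using \<mu>(1) YR by blast
      show False using \<mu>(2) Ypos[OF \<mu>(1)] integral_diff_const[OF cpt f \<mu>R, of \<epsilon>] by simp
    qed
  qed

  have h24: "P4" if P2: "P2"
  proof -
    have star: "\<exists>\<mu>\<in>Y. Nf \<mu> g \<le> Nf \<mu>0 g" if g: "g \<in> C0" for g
    proof -
      define c where "c = Nf \<mu>0 g"
      have "c * measure \<mu>0 UNIV = (\<integral>x. g x \<partial>\<mu>0)" using m0 by (simp add: c_def Nf_def)
      then have "(\<integral>x. g x - c \<partial>\<mu>0) = 0" using integral_diff_const[OF cpt g \<mu>0, of c] by simp
      moreover have "(\<lambda>x. g x - c) \<in> C0" by (rule C0_diff[OF g C0_const])
      ultimately obtain \<mu> where \<mu>: "\<mu> \<in> Y" "(\<integral>x. g x - c \<partial>\<mu>) \<le> 0" using P2 unfolding P2_def by blast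
      have \<mu>R: "\<mu> \<in> radon_measures" using \<mu>(1) YR by blast
      have mpos: "measure \<mu> UNIV > 0" using radonD(4)[OF \<mu>R] .
      have "(\<integral>x. g x \<partial>\<mu>) \<le> c * measure \<mu> UNIV" using \<mu>(2) integral_diff_const[OF cpt g \<mu>R, of c] by simp
      then have "Nf \<mu> g \<le> c" using mpos by (simp add: Nf_def divide_le_eq)
      then show ?thesis using \<mu>(1) unfolding c_def by blast
    qed
    obtain m where m: "\<forall>k. m k \<in> Y" "\<forall>f\<in>C0. (\<lambda>k. (1 / real k) * (\<Sum>i=1..k. Nf (m i) f)) \<longlonglongrightarrow> Nf \<mu>0 f"
      using herding[OF cpt \<mu>0 YR star] by blast
    show ?thesis unfolding P4_def using m unfolding Nf_def by blast
  qed

  have h43: "P3" if P4: "P4"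
  proof -
    obtain m where mY: "\<forall>k. m k \<in> Y" and
      conv: "\<forall>f\<in>C0. (\<lambda>k. (1 / real k) * (\<Sum>i=1..k. (1 / measure (m i) UNIV) * (\<integral>x. f x \<partial>m i)))
                   \<longlonglongrightarrow> (1 / measure \<mu>0 UNIV) * (\<integral>x. f x \<partial>\<mu>0)"
      using P4 unfolding P4_def by blast
    have mR: "m i \<in> radon_measures" for i using mY YR by blast
    define l where "l i = measure \<mu>0 UNIV / measure (m i) UNIV" for i
    have lpos: "l i > 0" for i using m0 radonD(4)[OF mR] by (simp add: l_def)
    define M where "M i = scale_measure (ennreal (l i)) (m i)" for i
    have MR: "M i \<in> radon_measures" for i unfolding M_def by (rule scale_facts(1)[OF cpt mR lpos])
    have Mint: "(\<integral>x. f x \<partial>M i) = l i * (\<integral>x. f x \<partial>m i)" if "f \<in> C0" for f i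
      unfolding M_def by (rule scale_facts(2)[OF cpt mR lpos that])
    have Mpc: "M i \<in> pos_cone Y" for i unfolding M_def pos_cone_def using lpos mY by blast
    define Q where "Q k \<nu> \<longleftrightarrow> sets \<nu> = sets borel \<and> (\<forall>A\<in>sets borel. emeasure \<nu> A = (\<Sum>i\<in>{1..k}. ennreal (1 / real k) * emeasure (M i) A))" for k \<nu>
    define \<nu> where "\<nu> k = (SOME \<nu>. Q k \<nu>)" for k
    have \<nu>Q: "Q k (\<nu> k)" for k
    proof -
      have "\<exists>\<nu>. Q k \<nu>" unfolding Q_def
        by (rule mix_exists) (use radonD(1)[OF MR] in auto)
      then show ?thesis unfolding \<nu>_def by (rule someI_ex)
    qed
    have \<nu>s: "sets (\<nu> k) = sets borel" for k using \<nu>Q[of k] by (simp add: Q_def)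
    have \<nu>em: "\<And>A. A \<in> sets borel \<Longrightarrow> emeasure (\<nu> k) A = (\<Sum>i\<in>{1..k}. ennreal (1 / real k) * emeasure (M i) A)" for k
      using \<nu>Q[of k] by (simp add: Q_def)
    have \<nu>fin: "finite_measure (\<nu> k)" for k
      by (rule mix_int(1)[OF cpt C0_const, of "{1..k}" "\<nu> k" M "\<lambda>_. 1 / real k"])
         (use \<nu>s radonD[OF MR] \<nu>em in auto)
    have \<nu>int: "(\<integral>x. f x \<partial>\<nu> k) = measure \<mu>0 UNIV * ((1 / real k) * (\<Sum>i=1..k. (1 / measure (m i) UNIV) * (\<integral>x. f x \<partial>m i)))"
      if f: "f \<in> C0" for f k
    proof -
      have "(\<integral>x. f x \<partial>\<nu> k) = (\<Sum>i\<in>{1..k}. (1 / real k) * (\<integral>x. f x \<partial>M i))"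
        by (rule mix_int(2)[OF cpt f, of "{1..k}" "\<nu> k" M "\<lambda>_. 1 / real k"])
           (use \<nu>s radonD[OF MR] \<nu>em in auto)
      also have "\<dots> = (\<Sum>i\<in>{1..k}. measure \<mu>0 UNIV * ((1 / real k) * ((1 / measure (m i) UNIV) * (\<integral>x. f x \<partial>m i))))"
        by (intro sum.cong refl) (simp add: Mint[OF f] l_def)
      also have "\<dots> = measure \<mu>0 UNIV * ((1 / real k) * (\<Sum>i=1..k. (1 / measure (m i) UNIV) * (\<integral>x. f x \<partial>m i)))"
        by (simp add: sum_distrib_left)
      finally show ?thesis .
    qed
    have \<nu>conv: "(\<lambda>k. (\<integral>x. f x \<partial>\<nu> k)) \<longlonglongrightarrow> (\<integral>x. f x \<partial>\<mu>0)" if f: "f \<in> C0" for f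
    proof -
      have "(\<lambda>k. measure \<mu>0 UNIV * ((1 / real k) * (\<Sum>i=1..k. (1 / measure (m i) UNIV) * (\<integral>x. f x \<partial>m i))))
            \<longlonglongrightarrow> measure \<mu>0 UNIV * ((1 / measure \<mu>0 UNIV) * (\<integral>x. f x \<partial>\<mu>0))"
        using conv f by (intro tendsto_mult_left) blast
      then show ?thesis using m0 by (simp add: \<nu>int[OF f])
    qed
    have \<nu>R: "\<nu> k \<in> radon_measures" if k: "k \<ge> 1" for k
    proof -
      have "(\<integral>x. 1 \<partial>\<nu> k) = measure \<mu>0 UNIV * ((1 / real k) * (\<Sum>i=1..k. (1 / measure (m i) UNIV) * (\<integral>x. 1 \<partial>m i)))"
        using \<nu>int[of "\<lambda>x. 1" k] by simp
      also have "\<dots> = measure \<mu>0 UNIV"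
      proof -
        have "(\<Sum>i=1..k. (1 / measure (m i) UNIV) * (\<integral>x. 1 \<partial>m i)) = (\<Sum>i=1..k. 1)"
        proof (intro sum.cong refl)
          fix i
          have "measure (m i) UNIV \<noteq> 0" using radonD(4)[OF mR, of i] by simp
          then show "(1 / measure (m i) UNIV) * (\<integral>x. 1 \<partial>m i) = 1" using radonD(2)[OF mR, of i] by simp
        qed
        then show ?thesis using k by simp
      qed
      finally have "measure (\<nu> k) UNIV = measure \<mu>0 UNIV"
        using sets_eq_imp_space_eq[OF \<nu>s[of k]] by simp
      then have "measure (\<nu> k) UNIV > 0" using m0 by simp
      then have "emeasure (\<nu> k) UNIV \<noteq> 0" by (metis measure_def enn2real_0 less_irrefl)
      then show ?thesis using \<nu>s \<nu>fin by (simp add: radon_measures_def)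
    qed
    have \<nu>K: "\<nu> k \<in> meas_convex_hull (pos_cone Y)" if k: "k \<ge> 1" for k
      unfolding meas_convex_hull_def
    proof (intro CollectI exI conjI)
      show "finite {1..k}" by simp
      show "{1..k} \<noteq> {}" using k by simp
      show "\<forall>i\<in>{1..k}. 0 \<le> 1 / real k \<and> M i \<in> pos_cone Y" using Mpc by simp
      show "(\<Sum>i\<in>{1..k}. 1 / real k) = 1" using k by simp
      show "sets (\<nu> k) = sets borel" by (rule \<nu>s)
      show "\<forall>A\<in>sets borel. emeasure (\<nu> k) A = (\<Sum>i\<in>{1..k}. ennreal (1 / real k) * emeasure (M i) A)"
        using \<nu>em by blast
    qed
    show ?thesis unfolding P3_def closure_of_def
    proof (intro CollectI conjI allI impI)
      show "\<mu>0 \<in> topspace weak_star_topology" unfolding ws_topspace by (rule \<mu>0)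
      fix T assume T: "\<mu>0 \<in> T \<and> openin weak_star_topology T"
      have ev1: "eventually (\<lambda>k. k \<ge> (1::nat)) sequentially" by (rule eventually_ge_at_top)
      have evR: "eventually (\<lambda>k. \<nu> k \<in> radon_measures) sequentially"
        using ev1 by (rule eventually_mono) (rule \<nu>R)
      have "eventually (\<lambda>k. \<nu> k \<in> T) sequentially"
      proof (rule ws_eventually)
        show "eventually (\<lambda>k. \<nu> k \<in> radon_measures) sequentially" by (rule evR)
        show "openin weak_star_topology T" using T by simp
        show "\<mu>0 \<in> T" using T by simp
        show "(\<lambda>k. (\<integral>x. f x \<partial>\<nu> k)) \<longlonglongrightarrow> (\<integral>x. f x \<partial>\<mu>0)" if "f \<in> C0" for f
          using \<nu>conv[OF that] .
      qed
      then have "eventually (\<lambda>k. \<nu> k \<in> T \<and> k \<ge> 1) sequentially" using ev1 by (rule eventually_conj)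
      then obtain N where N: "\<forall>n\<ge>N. \<nu> n \<in> T \<and> n \<ge> 1" unfolding eventually_sequentially by (elim exE)
      then have "\<nu> N \<in> T" "N \<ge> 1" by auto
      then show "\<exists>y\<in>meas_convex_hull (pos_cone Y). y \<in> T" using \<nu>K[of N] by (intro bexI[of _ "\<nu> N"])
    qed
  qed

  have h31: "P1" if P3: "P3"
    unfolding P1_def
  proof (intro ballI impI)
    fix f :: "'a \<Rightarrow> real" assume f: "f \<in> C0" and neg: "(\<integral>x. f x \<partial>\<mu>0) < 0"
    show "\<exists>\<mu>\<in>Y. (\<integral>x. f x \<partial>\<mu>) \<le> 0"
    proof (rule ccontr)
      assume "\<not> (\<exists>\<mu>\<in>Y. (\<integral>x. f x \<partial>\<mu>) \<le> 0)"
      then have pos: "\<And>\<mu>. \<mu> \<in> Y \<Longrightarrow> (\<integral>x. f x \<partial>\<mu>) > 0" by force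
      define T where "T = {\<mu> \<in> radon_measures. (\<integral>x. f x \<partial>\<mu>) \<in> {..<0}}"
      have To: "openin weak_star_topology T" unfolding T_def by (rule ws_open[OF f open_lessThan])
      have "\<mu>0 \<in> T" using \<mu>0 neg by (simp add: T_def)
      moreover have "\<forall>T. \<mu>0 \<in> T \<and> openin weak_star_topology T \<longrightarrow> (\<exists>y\<in>meas_convex_hull (pos_cone Y). y \<in> T)"
      proof -
        have "\<mu>0 \<in> {x \<in> topspace weak_star_topology. \<forall>T. x \<in> T \<and> openin weak_star_topology T \<longrightarrow> (\<exists>y\<in>meas_convex_hull (pos_cone Y). y \<in> T)}"
          using P3 unfolding P3_def closure_of_def .
        then show ?thesis unfolding mem_Collect_eq by (rule conjunct2)
      qed
      ultimately have "\<exists>y\<in>meas_convex_hull (pos_cone Y). y \<in> T" using To by simp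
      then obtain \<nu> where \<nu>: "\<nu> \<in> meas_convex_hull (pos_cone Y)" "\<nu> \<in> T" by (rule bexE)
      from \<nu>(1) obtain I :: "nat set" and c :: "nat \<Rightarrow> real" and M :: "nat \<Rightarrow> 'a measure" where hull: "finite I" "I \<noteq> {}"
        "\<forall>i\<in>I. c i \<ge> (0::real) \<and> M i \<in> pos_cone Y" "(\<Sum>i\<in>I. c i) = 1" "sets \<nu> = sets borel"
        "\<forall>A\<in>sets borel. emeasure \<nu> A = (\<Sum>i\<in>I. ennreal (c i) * emeasure (M i) A)"
        unfolding meas_convex_hull_def by (elim CollectE exE conjE) (rule that)
      have MR: "M i \<in> radon_measures" if "i \<in> I" for i
      proof -
        have "M i \<in> pos_cone Y" using hull(3) that by simp
        then show ?thesis by (rule pos_cone_facts(1)[OF cpt YR])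
      qed
      have Mnn: "(\<integral>x. f x \<partial>M i) \<ge> 0" if "i \<in> I" for i
      proof -
        have "M i \<in> pos_cone Y" using hull(3) that by simp
        from pos_cone_facts(2)[OF cpt YR this] obtain l \<mu> where
          l: "l > 0" "\<mu> \<in> Y" "\<forall>f\<in>C0. (\<integral>x. f x \<partial>M i) = l * (\<integral>x. f x \<partial>\<mu>)"
          by (elim exE conjE)
        have "(\<integral>x. f x \<partial>M i) = l * (\<integral>x. f x \<partial>\<mu>)" using l(3) f by simp
        then show ?thesis using pos[OF l(2)] l(1) by simp
      qed
      have sM: "\<And>i. i \<in> I \<Longrightarrow> sets (M i) = sets borel" using radonD(1)[OF MR] .
      have fM: "\<And>i. i \<in> I \<Longrightarrow> finite_measure (M i)" using radonD(3)[OF MR] .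
      have c0: "\<And>i. i \<in> I \<Longrightarrow> c i \<ge> 0" using hull(3) by simp
      have em: "\<And>A. A \<in> sets borel \<Longrightarrow> emeasure \<nu> A = (\<Sum>i\<in>I. ennreal (c i) * emeasure (M i) A)"
        using hull(6) by simp
      have "(\<integral>x. f x \<partial>\<nu>) = (\<Sum>i\<in>I. c i * (\<integral>x. f x \<partial>M i))"
        by (rule mix_int(2)[OF cpt f hull(1) hull(5) sM fM c0 em])
      also have "\<dots> \<ge> 0" using hull(3) Mnn by (intro sum_nonneg) simp
      finally show False using \<nu>(2) by (simp add: T_def)
    qed
  qed

  have "P1 = P2 \<and> P2 = P3 \<and> P3 = P4"
    using h12 h21 h24 h43 h31 by blast
  then show ?thesis unfolding P1_def P2_def P3_def P4_def .
qed


end
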